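(* Let $p$ be a prime, $S$ a ring of characteristic $p$, and $S[y]$ the polynomial ring in one variable over $S$. For every $f\in S[y]$, writing $f'$ for its formal derivative, $(f')^pS[y]\subset S[y^p,f]$. *)

theory Defs
  imports "HOL-Computational_Algebra.Polynomial"
begin

inductive_set poly_subalg :: "'a::comm_ring_1 poly set \<Rightarrow> 'a poly set"
  for G :: "'a poly set" where
  const: "[:c:] \<in> poly_subalg G"
| gen: "g \<in> G \<Longrightarrow> g \<in> poly_subalg G"
| add: "a \<in> poly_subalg G \<Longrightarrow> b \<in> poly_subalg G \<Longrightarrow> a + b \<in> poly_subalg G"
| mult: "a \<in> poly_subalg G \<Longrightarrow> b \<in> poly_subalg G \<Longrightarrow> a * b \<in> poly_subalg G"

text \<open>Formal derivative over an arbitrary commutative ring (the library's pderiv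
requires no zero divisors): f' = sum of (i+1) a_(i+1) y^i.\<close>

definition formal_deriv :: "'a::comm_ring_1 poly \<Rightarrow> 'a poly" where
  "formal_deriv f = (\<Sum>i\<le>degree f. monom (of_nat (Suc i) * coeff f (Suc i)) i)"

end

theory Submission imports Defs "HOL-Computational_Algebra.Primes" begin

definition ee :: "nat \<Rightarrow> nat \<Rightarrow> 'a::comm_ring_1 poly" where
  "ee p i = (if i mod p = p - 1 then [:0,1:] ^ (p * (i div p)) else 0)"

definition tau :: "nat \<Rightarrow> 'a::comm_ring_1 poly poly \<Rightarrow> 'a poly" where
  "tau p R = (\<Sum>i\<le>degree R. coeff R i * ee p i)"

lemma tau_le: "degree R \<le> N \<Longrightarrow> tau p R = (\<Sum>i\<le>N. coeff R i * ee p i)"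
  unfolding tau_def by (rule sum.mono_neutral_left) (auto simp: coeff_eq_0)

lemma tau_add: "tau p (R + S) = tau p R + tau p S"
proof -
  let ?N = "max (degree R) (degree S)"
  have "degree (R + S) \<le> ?N" by (rule degree_add_le) auto
  then have "tau p (R + S) = (\<Sum>i\<le>?N. coeff (R + S) i * ee p i)" by (rule tau_le)
  also have "\<dots> = (\<Sum>i\<le>?N. coeff R i * ee p i) + (\<Sum>i\<le>?N. coeff S i * ee p i)"
    by (simp add: distrib_right sum.distrib)
  also have "\<dots> = tau p R + tau p S"
    using tau_le[of R ?N p] tau_le[of S ?N p] by simp
  finally show ?thesis .
qed

lemma tau_smult: "tau p (smult c R) = c * tau p R"
proof -
  have "tau p (smult c R) = (\<Sum>i\<le>degree R. coeff (smult c R) i * ee p i)"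
    by (rule tau_le) (simp add: degree_smult_le)
  then show ?thesis by (simp add: tau_def sum_distrib_left mult.assoc)
qed

lemma tau_minus: "tau p (- R) = - tau p R"
  using tau_smult[of p "-1" R] by simp

lemma tau_diff: "tau p (R - S) = tau p R - tau p S"
  using tau_add[of p R "- S"] tau_minus[of p S] by simp

lemma tau_0 [simp]: "tau p 0 = 0"
  by (simp add: tau_def)

lemma tau_sum: "tau p (\<Sum>i\<in>A. R i) = (\<Sum>i\<in>A. tau p (R i))"
  by (induction A rule: infinite_finite_induct) (simp_all add: tau_add)

lemma tau_monom: "tau p (monom c m) = c * ee p m"
proof -
  have "tau p (monom c m) = (\<Sum>i\<le>m. coeff (monom c m) i * ee p i)"
    by (rule tau_le) (simp add: degree_monom_le)
  also have "\<dots> = (\<Sum>i\<le>m. if i = m then c * ee p i else 0)"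
    by (rule sum.cong) (auto simp: coeff_monom)
  also have "\<dots> = c * ee p m" by simp
  finally show ?thesis .
qed

lemma ee_shift: "p > 0 \<Longrightarrow> ee p (i + p) = [:0,1:] ^ p * ee p i"
  by (simp add: ee_def power_add algebra_simps)

lemma tau_mult_Yp:
  assumes "p > 0"
  shows "tau p (R * [:0,1:] ^ p) = [:0,1:] ^ p * tau p R"
proof -
  have "R * [:0,1:] ^ p = (\<Sum>i\<le>degree R. monom (coeff R i) i) * monom 1 p"
    by (simp add: poly_as_sum_of_monoms monom_altdef[of 1 p])
  also have "\<dots> = (\<Sum>i\<le>degree R. monom (coeff R i) (i + p))"
    by (simp add: sum_distrib_right mult_monom)
  finally have "tau p (R * [:0,1:] ^ p) = (\<Sum>i\<le>degree R. coeff R i * ee p (i + p))"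
    by (simp add: tau_sum tau_monom)
  also have "\<dots> = [:0,1:] ^ p * tau p R"
    using assms by (simp add: ee_shift tau_def sum_distrib_left algebra_simps)
  finally show ?thesis .
qed

lemma tau_cmult: "tau p ([:c:] * R) = c * tau p R"
  by (simp add: tau_smult)

lemma tau_vanish:
  assumes "p > 0"
  shows "tau p (R * ([:0,1:] ^ p - [:[:0,1:] ^ p:])) = 0"
proof -
  have "R * ([:0,1:] ^ p - [:[:0,1:] ^ p:]) = R * [:0,1:] ^ p - smult ([:0,1:] ^ p) R"
    by (simp add: algebra_simps)
  then show ?thesis using assms by (simp add: tau_diff tau_smult tau_mult_Yp)
qed

lemma frob_lin:
  fixes X :: "'a::comm_ring_1 poly"
  assumes "prime p" "CHAR('a) = p"
  shows "[:-X, 1:] ^ p = [:0,1:] ^ p - [:X ^ p:]"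
proof -
  have ch: "CHAR('a poly poly) = p" using assms by simp
  have pc: "prime CHAR('a poly poly)" using assms ch by simp
  have "[:-X, 1:] = [:0,1:] + (- [:X:])" by simp
  then have "[:-X, 1:] ^ p = [:0,1:] ^ p + (- [:X:]) ^ p"
    using freshmans_dream[where x="[:0,1:] :: 'a poly poly" and y="- [:X:]", OF pc ch[symmetric]]
    by metis
  also have "(- [:X:]) ^ p = - ([:X:] ^ p)"
    by (rule minus_power_prime_CHAR[OF ch[symmetric]]) (use assms in simp)
  also have "[:X:] ^ p = [:X ^ p:]" by (simp add: poly_const_pow)
  finally show ?thesis by simp
qed

lemma tau_lin_power:
  fixes X :: "'a::comm_ring_1 poly"
  assumes "p > 0"
  shows "tau p ([:-X, 1:] ^ (p - 1)) = 1"
proof -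
  have "tau p ([:-X, 1:] ^ (p - 1)) = (\<Sum>i\<le>p - 1. coeff ([:-X, 1:] ^ (p - 1)) i * ee p i)"
    by (rule tau_le) (simp add: degree_linear_power)
  also have "\<dots> = (\<Sum>i\<le>p - 1. if i = p - 1 then coeff ([:-X, 1:] ^ (p - 1)) i else 0)"
    using assms by (intro sum.cong) (auto simp: ee_def)
  also have "\<dots> = 1" by (simp add: coeff_linear_power)
  finally show ?thesis .
qed

lemma tau_delta:
  fixes R :: "'a::comm_ring_1 poly poly"
  assumes "prime p" "CHAR('a) = p"
  shows "tau p (R * [:-[:0,1:], 1:] ^ (p - 1)) = poly R [:0,1:]"
proof (induction R)
  case 0
  then show ?case by simp
next
  case (pCons c R)
  define X :: "'a poly" where "X = [:0,1:]"
  define L where "L = [:-X, 1:]"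
  have p0: "p > 0" using assms prime_gt_0_nat by blast
  have LL: "L * L ^ (p - 1) = [:0,1:] ^ p - [:X ^ p:]"
    using frob_lin[OF assms, of X] p0 unfolding L_def by (simp add: power_eq_if[of _ p])
  have "pCons c R = [:c:] + (L + [:X:]) * R" by (simp add: L_def)
  then have "pCons c R * L ^ (p - 1) = [:c:] * L ^ (p - 1) + [:X:] * (R * L ^ (p - 1)) + R * (L * L ^ (p - 1))"
    by (simp add: algebra_simps)
  then have "tau p (pCons c R * L ^ (p - 1)) = c * tau p (L ^ (p - 1)) + X * tau p (R * L ^ (p - 1)) + tau p (R * (L * L ^ (p - 1)))"
    by (simp only: tau_add tau_cmult)
  also have "tau p (R * (L * L ^ (p - 1))) = 0"
    unfolding LL X_def by (rule tau_vanish[OF p0])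
  also have "tau p (L ^ (p - 1)) = 1" unfolding L_def using tau_lin_power[OF p0] by simp
  also have "tau p (R * L ^ (p - 1)) = poly R X" using pCons unfolding L_def X_def by simp
  finally show ?case by (simp add: L_def X_def)
qed

definition lift :: "'a::comm_ring_1 poly \<Rightarrow> 'a poly poly" where
  "lift q = map_poly (\<lambda>a. [:a:]) q"

lemma coeff_lift [simp]: "coeff (lift q) i = [:coeff q i:]"
  by (simp add: lift_def coeff_map_poly)

lemma lift_add: "lift (a + b) = lift a + lift b"
  by (rule poly_eqI) simp

lemma lift_pCons: "lift (pCons c q) = pCons [:c:] (lift q)"
  by (simp add: lift_def map_poly_pCons)

lemma lift_smult: "lift (smult c q) = smult [:c:] (lift q)"
  by (rule poly_eqI) simp

lemma lift_mult: "lift (a * b) = lift a * lift b"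
proof (induction a)
  case 0
  then show ?case by (simp add: lift_def)
next
  case (pCons c a)
  have "lift (pCons c a * b) = lift (smult c b) + lift (pCons 0 (a * b))"
    by (simp add: lift_add)
  also have "\<dots> = smult [:c:] (lift b) + pCons 0 (lift a * lift b)"
    by (simp add: lift_smult lift_pCons pCons.IH)
  also have "\<dots> = lift (pCons c a) * lift b"
    by (simp add: lift_pCons)
  finally show ?case .
qed

lemma lift_power: "lift (a ^ n) = lift a ^ n"
  by (induction n) (simp_all add: lift_mult, simp add: lift_def)

lemma poly_lift [simp]: "poly (lift q) [:0,1:] = q"
  by (induction q) (simp_all add: lift_pCons, simp add: lift_def)

lemma coeff_formal_deriv: "coeff (formal_deriv f) i = of_nat (Suc i) * coeff f (Suc i)"
proof -
  have "coeff (formal_deriv f) i = (\<Sum>j\<le>degree f. if j = i then of_nat (Suc j) * coeff f (Suc j) else 0)"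
    unfolding formal_deriv_def coeff_sum by (intro sum.cong) (auto simp: coeff_monom)
  also have "\<dots> = of_nat (Suc i) * coeff f (Suc i)"
    by (auto simp: coeff_eq_0)
  finally show ?thesis .
qed

lemma formal_deriv_pCons: "formal_deriv (pCons a q) = q + pCons 0 (formal_deriv q)"
  by (rule poly_eqI) (auto simp: coeff_formal_deriv coeff_pCons algebra_simps split: nat.splits)

lemma formal_deriv_lift: "formal_deriv (lift q) = lift (formal_deriv q)"
  by (rule poly_eqI) (simp add: coeff_formal_deriv of_nat_poly)

lemma poly_synthetic_div_deriv:
  fixes P :: "'a::comm_ring_1 poly"
  shows "poly (synthetic_div P c) c = poly (formal_deriv P) c"
  by (induction P) (simp_all add: formal_deriv_pCons, simp add: formal_deriv_def)

lemma subalg_zero: "0 \<in> poly_subalg G"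
  using poly_subalg.const[of 0 G] by simp

lemma subalg_one: "1 \<in> poly_subalg G"
  using poly_subalg.const[of 1 G] by (simp add: one_pCons)

lemma subalg_power: "a \<in> poly_subalg G \<Longrightarrow> a ^ n \<in> poly_subalg G"
  by (induction n) (simp_all add: subalg_one poly_subalg.mult)

lemma subalg_sum: "(\<And>i. i \<in> A \<Longrightarrow> a i \<in> poly_subalg G) \<Longrightarrow> (\<Sum>i\<in>A. a i) \<in> poly_subalg G"
  by (induction A rule: infinite_finite_induct) (simp_all add: subalg_zero poly_subalg.add)

lemma tau_lift_in:
  fixes f :: "'a::comm_ring_1 poly"
  shows "tau p (lift q) \<in> poly_subalg {[:0,1:] ^ p, f}"
  unfolding tau_def
proof (rule subalg_sum)
  fix i
  have "ee p i \<in> poly_subalg {[:0,1:] ^ p, f}"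
  proof (cases "i mod p = p - 1")
    case True
    have "([:0,1:] ^ p) ^ (i div p) \<in> poly_subalg {[:0,1:] ^ p, f :: 'a poly}"
      by (intro subalg_power poly_subalg.gen) simp
    then show ?thesis using True by (simp add: ee_def power_mult)
  qed (simp add: ee_def subalg_zero)
  then show "coeff (lift q) i * ee p i \<in> poly_subalg {[:0,1:] ^ p, f}"
    using poly_subalg.mult[OF poly_subalg.const[of "coeff q i"]] by simp
qed

theorem theorem6p10:
  fixes f g :: "'a::comm_ring_1 poly" and p :: nat
  assumes "prime (p::nat)" and "CHAR('a) = p"
  shows "(formal_deriv f) ^ p * g \<in> poly_subalg {[:0, 1:] ^ p, f}"
proof -
  define X :: "'a poly" where "X = [:0,1:]"
  define h where "h = formal_deriv f"
  define L :: "'a poly poly" where "L = [:-X, 1:]"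
  define F where "F = lift f"
  define G where "G = lift g"
  define H where "H = lift h"
  define W where "W = synthetic_div F X"
  have p0: "p > 0" using assms(1) prime_gt_0_nat by blast
  have hp: "h ^ p = h * h ^ (p - 1)" using p0 by (cases p) auto
  have eqF: "L * W + [:f:] = F"
    using synthetic_div_correct'[of X F] by (simp add: L_def W_def F_def X_def)
  have polyW: "poly W X = h"
    unfolding W_def poly_synthetic_div_deriv F_def formal_deriv_lift X_def h_def by simp
  define M where "M = H * W ^ (p - 1) - [:h ^ p:]"
  have polyM: "poly M X = 0"
    using polyW by (simp add: M_def H_def X_def hp)
  define K where "K = synthetic_div M X"
  have eqM: "L * K = M"
    using synthetic_div_correct'[of X M] polyM by (simp add: L_def K_def)
  define P where "P = G * H * (F - [:f:]) ^ (p - 1)"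
  define Q where "Q = smult (h ^ p) (G * L ^ (p - 1))"
  have FL: "F - [:f:] = L * W" using eqF by (simp add: algebra_simps)
  have "P - Q = G * L ^ (p - 1) * M"
    by (simp add: P_def Q_def M_def FL power_mult_distrib algebra_simps)
  also have "\<dots> = (G * K) * (L * L ^ (p - 1))"
    by (simp add: eqM[symmetric] algebra_simps)
  also have "L * L ^ (p - 1) = L ^ p" using p0 by (cases p) auto
  also have "L ^ p = [:0,1:] ^ p - [:[:0,1:] ^ p:]"
    using frob_lin[OF assms, of X] by (simp add: L_def X_def)
  finally have "tau p (P - Q) = 0" using tau_vanish[OF p0] by simp
  then have tPQ: "tau p P = tau p Q" by (simp add: tau_diff)
  have tQ: "tau p Q = h ^ p * g"
    using tau_delta[OF assms, of G] by (simp add: Q_def tau_smult G_def L_def X_def)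
  have Pexp: "P = (\<Sum>k\<le>p - 1. [:of_nat ((p - 1) choose k) * (- f) ^ (p - 1 - k):] * lift (g * h * f ^ k))"
  proof -
    have "P = G * H * (F + [:- f:]) ^ (p - 1)" by (simp add: P_def diff_conv_add_uminus)
    also have "\<dots> = G * H * (\<Sum>k\<le>p - 1. of_nat ((p - 1) choose k) * F ^ k * [:- f:] ^ (p - 1 - k))"
      by (simp add: binomial_ring)
    also have "\<dots> = (\<Sum>k\<le>p - 1. [:of_nat ((p - 1) choose k) * (- f) ^ (p - 1 - k):] * lift (g * h * f ^ k))"
      unfolding sum_distrib_left
      by (intro sum.cong refl) (simp add: F_def G_def H_def lift_mult lift_power of_nat_poly poly_const_pow algebra_simps)
    finally show ?thesis .
  qed
  have "tau p P = (\<Sum>k\<le>p - 1. (of_nat ((p - 1) choose k) * (- f) ^ (p - 1 - k)) * tau p (lift (g * h * f ^ k)))"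
    unfolding Pexp tau_sum tau_cmult ..
  also have "\<dots> \<in> poly_subalg {[:0, 1:] ^ p, f}"
  proof (rule subalg_sum)
    fix k
    have mf: "- f \<in> poly_subalg {[:0, 1:] ^ p, f}"
      using poly_subalg.mult[OF poly_subalg.const[of "-1"] poly_subalg.gen[of f]] by simp
    have "of_nat ((p - 1) choose k) \<in> poly_subalg {[:0, 1:] ^ p, f}"
      by (simp add: of_nat_poly poly_subalg.const)
    then show "(of_nat ((p - 1) choose k) * (- f) ^ (p - 1 - k)) * tau p (lift (g * h * f ^ k)) \<in> poly_subalg {[:0, 1:] ^ p, f}"
      by (intro poly_subalg.mult subalg_power mf tau_lift_in)
  qed
  finally show ?thesis using tPQ tQ by (simp add: h_def)
qed

end
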